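(* Let $\mathbf{V}\in\mathbb{R}^{N\times N}$ with $\mathbf{1}_N^\top\mathbf{V}=\mathbf{1}_N^\top$ and $\mathbf{V}\boldsymbol\mu=\boldsymbol\mu$, and $\mathbf{A}\in\mathbb{R}^{T\times N}$ with $\mathbf{1}_T^\top\mathbf{A}=\mathbf{1}_N^\top$. Then $$\mathbb{E}\hat\nabla_{\mathbf{V}}l=\|\mathbf{A}\|_\mu^2(\mathbf{V}-\boldsymbol\mu\mathbf{1}^\top)-\langle\mathbf{Q},\mathbf{A}\rangle_\mu(\mathbf{P}-\boldsymbol\mu\mathbf{1}^\top),$$ and for each $k\in[N]$, $$\mathbb{E}\hat\nabla_{\mathbf{a}^{(k)}}l=(\|\mathbf{V}\|_\mu^2-\|\boldsymbol\mu\|^2)\Big(\mathbf{a}^{(k)}-\frac{\mathbf{1}}{T}\Big)-(\langle\mathbf{V},\mathbf{P}\rangle_\mu-\|\boldsymbol\mu\|^2)\Big(\mathbf{q}^{(k)}-\frac{\mathbf{1}}{T}\Big).$$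
   Context: Let $\mathbf{P}\in\mathbb{R}^{N\times N}$ have nonnegative entries with columns summing to $1$, and let $\boldsymbol\mu\in\mathbb{R}^N$ be a probability vector with positive entries and $\mathbf{P}\boldsymbol\mu=\boldsymbol\mu$. Let $\mathbf{Q}=(\mathbf{q}^{(1)},\dots,\mathbf{q}^{(N)})\in\mathbb{R}^{T\times N}$ with each $\mathbf{q}^{(k)}$ a probability vector. Data: $x_1,\dots,x_{T+1}$ i.i.d. with law $\boldsymbol\mu$, and $x_o$ with $\Pr(x_o=n\mid x_{T+1}=k,x_1,\dots,x_T)=\sum_tq^{(k)}_tP_{n,x_t}$; $\mathbf{X}=(\mathbf{e}_{x_1},\dots,\mathbf{e}_{x_T})$. Loss $l=\frac12\|\mathbf{e}_{x_o}-\mathbf{V}\mathbf{X}\mathbf{A}\mathbf{e}_{x_{T+1}}\|^2$, $\mathbf{a}^{(k)}$ the $k$-th column of $\mathbf{A}$. Preconditioned gradients: $\hat\nabla_{\mathbf{V}}l=(\mathbf{I}_N-\mathbf{1}_N\mathbf{1}_N^\top/N)(\nabla_{\mathbf{V}}l)\operatorname{diag}(1/\boldsymbol\mu)(\mathbf{I}_N-\boldsymbol\mu\boldsymbol\mu^\top/\|\boldsymbol\mu\|^2)$ and $\hat\nabla_{\mathbf{a}^{(k)}}l=\frac{1}{\mu_k}(\mathbf{I}_T-\mathbf{1}_T\mathbf{1}_T^\top/T)\nabla_{\mathbf{a}^{(k)}}l$. $\mathbb{E}$ is expectation over the data with $\mathbf{V},\mathbf{A}$ fixed. $\langle\mathbf{M},\mathbf{M}'\rangle_\mu=\operatorname{Tr}(\mathbf{M}\operatorname{diag}(\boldsymbol\mu)\mathbf{M}'^\top)$,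 $\|\mathbf{M}\|_\mu^2=\langle\mathbf{M},\mathbf{M}\rangle_\mu$; $\|\boldsymbol\mu\|$ Euclidean. *)

theory Defs
  imports "HOL-Analysis.Analysis"
begin

text \<open>Matrices are rendered as real^'c^'r (r rows, c columns; entry M $ i $ j).
  The index type 'n stands for [N], the index type 't for [T].\<close>

definition ones :: "real^'a" where "ones = (\<chi> i. 1)"

definition outer :: "real^'a \<Rightarrow> real^'b \<Rightarrow> real^'b^'a" where
  "outer u v = (\<chi> i j. u $ i * v $ j)"

definition diagm :: "real^'a \<Rightarrow> real^'a^'a" where
  "diagm v = (\<chi> i j. if i = j then v $ i else 0)"

text \<open>Gradient w.r.t. the Euclidean (Frobenius for matrices) inner product.\<close>
definition grad :: "('v::real_inner \<Rightarrow> real) \<Rightarrow> 'v \<Rightarrow> 'v" where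
  "grad f x = (SOME g. (f has_derivative (\<lambda>h. inner g h)) (at x))"

text \<open>Data matrix X = (e_{x_1},...,e_{x_T}), N x T.\<close>
definition datamat :: "('t \<Rightarrow> 'n) \<Rightarrow> real^'t^'n" where
  "datamat xs = (\<chi> i t. if xs t = i then 1 else 0)"

text \<open>Loss l = 1/2 || e_{x_o} - V X A e_{x_{T+1}} ||^2, with x_{T+1} = y, x_o = z.\<close>
definition loss :: "real^'n^'n \<Rightarrow> real^'n^'t \<Rightarrow> ('t::finite \<Rightarrow> 'n::finite) \<Rightarrow> 'n \<Rightarrow> 'n \<Rightarrow> real" where
  "loss V A xs y z = (1/2) * (norm (axis z 1 - (V ** datamat xs ** A) *v axis y 1))\<^sup>2"

definition set_col :: "real^'n^'t \<Rightarrow> 'n \<Rightarrow> real^'t \<Rightarrow> real^'n^'t" where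
  "set_col A k a = (\<chi> t j. if j = k then a $ t else A $ t $ j)"

definition hat_grad_V :: "real^'n \<Rightarrow> real^'n^'n \<Rightarrow> real^'n^'t \<Rightarrow> ('t::finite \<Rightarrow> 'n::finite) \<Rightarrow> 'n \<Rightarrow> 'n \<Rightarrow> real^'n^'n" where
  "hat_grad_V mu V A xs y z =
     (mat 1 - (1 / real CARD('n)) *\<^sub>R outer ones ones)
     ** grad (\<lambda>W. loss W A xs y z) V
     ** diagm (\<chi> i. 1 / mu $ i)
     ** (mat 1 - (1 / (norm mu)\<^sup>2) *\<^sub>R outer mu mu)"

definition hat_grad_a :: "real^'n \<Rightarrow> real^'n^'n \<Rightarrow> real^'n^'t \<Rightarrow> 'n \<Rightarrow> ('t::finite \<Rightarrow> 'n::finite) \<Rightarrow> 'n \<Rightarrow> 'n \<Rightarrow> real^'t" where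
  "hat_grad_a mu V A k xs y z =
     (1 / mu $ k) *\<^sub>R ((mat 1 - (1 / real CARD('t)) *\<^sub>R outer ones ones)
       *v grad (\<lambda>a. loss V (set_col A k a) xs y z) (column k A))"

text \<open>Expectation over the data: x_1..x_T, x_{T+1} i.i.d. with law mu, and
  Pr(x_o = z | x_{T+1} = y, xs) = sum_t Q_{t,y} P_{z, x_t}.\<close>
definition expect :: "real^'n \<Rightarrow> real^'n^'n \<Rightarrow> real^'n^'t
    \<Rightarrow> (('t::finite \<Rightarrow> 'n::finite) \<Rightarrow> 'n \<Rightarrow> 'n \<Rightarrow> 'v::real_vector) \<Rightarrow> 'v" where
  "expect mu P Q f = (\<Sum>xs\<in>UNIV. \<Sum>y\<in>UNIV. \<Sum>z\<in>UNIV.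
      ((\<Prod>t\<in>UNIV. mu $ (xs t)) * mu $ y * (\<Sum>t\<in>UNIV. Q $ t $ y * P $ z $ (xs t)))
      *\<^sub>R f xs y z)"

definition mu_inner :: "real^'n \<Rightarrow> real^'n^'m \<Rightarrow> real^'n^'m \<Rightarrow> real" where
  "mu_inner mu M M' = trace (M ** diagm mu ** transpose M')"

end

theory Submission
  imports Defs
begin


definition Ex :: "real^'n \<Rightarrow> (('t::finite \<Rightarrow> 'n::finite) \<Rightarrow> real) \<Rightarrow> real" where
  "Ex mu F = (\<Sum>xs\<in>UNIV. (\<Prod>u\<in>UNIV. mu $ (xs u)) * F xs)"

lemma ind_mult: "(if P then 1 else 0) * (x::real) = (if P then x else 0)" by simp
lemma ifz_mult: "(if P then x else 0) * (y::real) = (if P then x * y else 0)" by simp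
lemma mult_ind: "(x::real) * (if P then 1 else 0) = (if P then x else 0)" by simp

lemma Ex_add: "Ex mu (\<lambda>xs. F xs + G xs) = Ex mu F + Ex mu G"
  unfolding Ex_def by (simp add: distrib_left sum.distrib)
lemma Ex_diff: "Ex mu (\<lambda>xs. F xs - G xs) = Ex mu F - Ex mu G"
  unfolding Ex_def by (simp add: right_diff_distrib sum_subtractf)
lemma Ex_cmult: "Ex mu (\<lambda>xs. c * F xs) = c * Ex mu F"
  unfolding Ex_def by (auto simp: sum_distrib_left intro!: sum.cong)
lemma Ex_multc: "Ex mu (\<lambda>xs. F xs * c) = Ex mu F * c"
  unfolding Ex_def by (auto simp: sum_distrib_right intro!: sum.cong)
lemma Ex_sum: "Ex mu (\<lambda>xs. \<Sum>i\<in>I. F i xs) = (\<Sum>i\<in>I. Ex mu (F i))"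
  unfolding Ex_def by (simp add: sum_distrib_left sum.swap[of _ I])

lemma Ex_prod:
  fixes w :: "'t::finite \<Rightarrow> 'n::finite \<Rightarrow> real"
  shows "(\<Sum>xs\<in>(UNIV::('t::finite \<Rightarrow> 'n::finite) set). \<Prod>u\<in>UNIV. w u (xs u)) = (\<Prod>u\<in>UNIV. \<Sum>i\<in>UNIV. w u i)"
  using prod_sum_PiE[of "UNIV::'t set" "\<lambda>_. UNIV::'n set" w] by simp

lemma Ex_pair_ind:
  fixes mu :: "real^'n::finite"
  assumes "t \<noteq> s" and ms: "(\<Sum>i\<in>UNIV. mu $ i) = 1"
  shows "Ex mu (\<lambda>xs::'t::finite \<Rightarrow> 'n. (if xs t = i then 1 else 0) * (if xs s = j then 1 else 0)) = mu $ i * mu $ j"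
proof -
  let ?w = "\<lambda>u k. mu $ k * (if u = t then (if k = i then 1 else 0) else if u = s then (if k = j then 1 else 0) else 1)"
  have "Ex mu (\<lambda>xs::'t::finite \<Rightarrow> 'n. (if xs t = i then 1 else 0) * (if xs s = j then 1 else 0))
     = (\<Sum>xs\<in>(UNIV::('t \<Rightarrow> 'n) set). \<Prod>u\<in>UNIV. ?w u (xs u))"
    unfolding Ex_def
  proof (rule sum.cong[OF refl])
    fix xs :: "'t \<Rightarrow> 'n"
    have "(\<Prod>u\<in>UNIV. ?w u (xs u)) = (\<Prod>u\<in>UNIV. mu $ xs u) * (\<Prod>u\<in>UNIV. (if u = t then (if xs u = i then 1 else 0) else if u = s then (if xs u = j then 1 else 0) else 1))"
      by (simp add: prod.distrib)
    also have "(\<Prod>u\<in>UNIV. (if u = t then (if xs u = i then 1 else 0) else if u = s then (if xs u = j then 1 else 0) else (1::real)))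
       = (if xs t = i then 1 else 0) * (if xs s = j then 1 else 0)"
    proof -
      have "(\<Prod>u\<in>UNIV. (if u = t then (if xs u = i then 1 else 0) else if u = s then (if xs u = j then 1 else 0) else (1::real)))
        = (\<Prod>u\<in>{t,s}. (if u = t then (if xs u = i then 1 else 0) else if u = s then (if xs u = j then 1 else 0) else (1::real)))"
        by (rule prod.mono_neutral_right) auto
      then show ?thesis using assms(1) by simp
    qed
    finally show "(\<Prod>u\<in>UNIV. mu $ xs u) * ((if xs t = i then 1 else 0) * (if xs s = j then 1 else 0)) = (\<Prod>u\<in>UNIV. ?w u (xs u))"
      by simp
  qed
  also have "\<dots> = (\<Prod>u\<in>UNIV. \<Sum>k\<in>UNIV. ?w u k)" by (rule Ex_prod)
  also have "\<dots> = (\<Prod>u\<in>UNIV. if u = t then mu $ i else if u = s then mu $ j else 1)"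
    by (rule prod.cong[OF refl]) (auto simp: ms ind_mult mult_ind sum.delta cong: if_cong)
  also have "\<dots> = (\<Prod>u\<in>{t,s}. if u = t then mu $ i else if u = s then mu $ j else 1)"
    by (rule prod.mono_neutral_right) auto
  also have "\<dots> = mu $ i * mu $ j" using assms(1) by simp
  finally show ?thesis .
qed

lemma Ex_single_ind:
  fixes mu :: "real^'n::finite"
  assumes ms: "(\<Sum>i\<in>UNIV. mu $ i) = 1"
  shows "Ex mu (\<lambda>xs::'t::finite \<Rightarrow> 'n. (if xs t = i then 1 else 0)) = mu $ i"
proof -
  let ?w = "\<lambda>u k. mu $ k * (if u = t then (if k = i then 1 else 0) else 1)"
  have "Ex mu (\<lambda>xs::'t::finite \<Rightarrow> 'n. (if xs t = i then 1 else 0))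
     = (\<Sum>xs\<in>(UNIV::('t \<Rightarrow> 'n) set). \<Prod>u\<in>UNIV. ?w u (xs u))"
    unfolding Ex_def
  proof (rule sum.cong[OF refl])
    fix xs :: "'t \<Rightarrow> 'n"
    have "(\<Prod>u\<in>UNIV. ?w u (xs u)) = (\<Prod>u\<in>UNIV. mu $ xs u) * (\<Prod>u\<in>UNIV. (if u = t then (if xs u = i then 1 else 0) else (1::real)))"
      by (simp add: prod.distrib)
    also have "(\<Prod>u\<in>UNIV. (if u = t then (if xs u = i then 1 else 0) else (1::real))) = (if xs t = i then 1 else 0)"
      by (subst prod.delta) auto
    finally show "(\<Prod>u\<in>UNIV. mu $ xs u) * (if xs t = i then 1 else 0) = (\<Prod>u\<in>UNIV. ?w u (xs u))"
      by simp
  qed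
  also have "\<dots> = (\<Prod>u\<in>UNIV. \<Sum>k\<in>UNIV. ?w u k)" by (rule Ex_prod)
  also have "\<dots> = (\<Prod>u\<in>UNIV. if u = t then mu $ i else 1)"
    by (rule prod.cong[OF refl]) (auto simp: ms ind_mult mult_ind sum.delta cong: if_cong)
  also have "\<dots> = mu $ i" by (subst prod.delta) auto
  finally show ?thesis .
qed

lemma decomp1: "(F (k::'n::finite)::real) = (\<Sum>i\<in>UNIV. (if k = i then 1 else 0) * F i)"
  by (simp add: ind_mult mult_ind cong: if_cong)

lemma Ex_pair:
  fixes mu :: "real^'n::finite"
  assumes ms: "(\<Sum>i\<in>UNIV. mu $ i) = 1"
  shows "Ex mu (\<lambda>xs::'t::finite \<Rightarrow> 'n. F (xs t) (xs s)) =
    (if t = s then (\<Sum>i\<in>UNIV. mu $ i * F i i) else (\<Sum>i\<in>UNIV. \<Sum>j\<in>UNIV. mu $ i * mu $ j * F i j))"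
proof (cases "t = s")
  case True
  have "Ex mu (\<lambda>xs::'t::finite \<Rightarrow> 'n. F (xs t) (xs s)) = Ex mu (\<lambda>xs. \<Sum>i\<in>UNIV. (if xs t = i then 1 else 0) * F i i)"
    using True by (simp add: ind_mult sum.delta)
  also have "\<dots> = (\<Sum>i\<in>UNIV. mu $ i * F i i)"
    by (simp add: Ex_sum Ex_multc Ex_single_ind[OF ms])
  finally show ?thesis using True by simp
next
  case False
  have "Ex mu (\<lambda>xs::'t::finite \<Rightarrow> 'n. F (xs t) (xs s)) = Ex mu (\<lambda>xs. \<Sum>i\<in>UNIV. \<Sum>j\<in>UNIV. (if xs t = i then 1 else 0) * (if xs s = j then 1 else 0) * F i j)"
  proof -
    have "F (xs t) (xs s) = (\<Sum>i\<in>UNIV. \<Sum>j\<in>UNIV. (if xs t = i then 1 else 0) * (if xs s = j then 1 else 0) * F i j)" for xs :: "'t \<Rightarrow> 'n"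
    proof -
      have "(\<Sum>i\<in>UNIV. \<Sum>j\<in>UNIV. (if xs t = i then 1 else 0) * (if xs s = j then 1 else 0) * F i j)
        = (\<Sum>i\<in>UNIV. (if xs t = i then 1 else 0) * (\<Sum>j\<in>UNIV. (if xs s = j then 1 else 0) * F i j))"
        by (simp add: sum_distrib_left mult.assoc)
      also have "\<dots> = F (xs t) (xs s)" by (simp add: ind_mult sum.delta)
      finally show ?thesis by simp
    qed
    then show ?thesis by simp
  qed
  also have "\<dots> = (\<Sum>i\<in>UNIV. \<Sum>j\<in>UNIV. mu $ i * mu $ j * F i j)"
    by (simp add: Ex_sum Ex_multc Ex_pair_ind[OF False ms])
  finally show ?thesis using False by simp
qed



lemma grad_eq:
  fixes g :: "'v::real_inner"
  assumes "(f has_derivative (\<lambda>h. inner g h)) (at x)"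
  shows "grad f x = g"
  unfolding grad_def
proof (rule some_equality)
  show "(f has_derivative inner g) (at x)" using assms by (simp add: fun_eq_iff)
next
  fix g' assume "(f has_derivative inner g') (at x)"
  then have e: "inner g' = inner g"
    using has_derivative_unique assms by (metis (no_types))
  have "inner g' (g' - g) = inner g (g' - g)" using e by simp
  then have "inner (g' - g) (g' - g) = 0" by (simp add: inner_diff_left)
  then show "g' = g" by simp
qed

lemma deriv_sq:
  assumes "bounded_linear L"
  shows "((\<lambda>w. (1/2) * (norm (c - L w))\<^sup>2) has_derivative (\<lambda>d. inner (L w - c) (L d))) (at w)"
proof -
  interpret L: bounded_linear L by fact
  have "((\<lambda>w. (1/2) * inner (c - L w) (c - L w)) has_derivative
     (\<lambda>d. (1/2) * (inner (c - L w) (0 - L d) + inner (0 - L d) (c - L w)))) (at w)"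
    by (intro derivative_intros L.has_derivative)
  then have "((\<lambda>w. (1/2) * (norm (c - L w))\<^sup>2) has_derivative
     (\<lambda>d. (1/2) * (inner (c - L w) (0 - L d) + inner (0 - L d) (c - L w)))) (at w)"
    by (simp add: power2_norm_eq_inner)
  then show ?thesis
    by (rule has_derivative_eq_rhs) (simp add: fun_eq_iff inner_commute inner_diff_left inner_diff_right algebra_simps)
qed



lemma mv_axis: "(M::real^'a::finite^'b::finite) *v axis k 1 = column k M"
  by (simp add: vec_eq_iff matrix_vector_mult_def axis_def column_def if_distrib cong: if_cong)

lemma setcol_axis: "set_col A k a *v axis y 1 = (if y = k then a else column y A)"
  by (simp add: mv_axis vec_eq_iff set_col_def column_def)

lemma column_setcol: "y \<noteq> k \<Longrightarrow> column y (set_col A k a) = column y A"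
  by (simp add: vec_eq_iff set_col_def column_def)

lemma bl_mv_left: "bounded_linear (\<lambda>W::real^'n::finite^'m::finite. W *v h)"
proof -
  have "linear (\<lambda>W::real^'n::finite^'m::finite. W *v h)"
    by (rule linearI) (simp_all add: vec_eq_iff matrix_vector_mult_def sum.distrib sum_distrib_left algebra_simps)
  then show ?thesis by (simp add: linear_conv_bounded_linear)
qed

lemma inner_outer: "inner r ((D::real^'a::finite^'b::finite) *v h) = inner (outer r h) D"
  by (simp add: inner_vec_def matrix_vector_mult_def outer_def sum_distrib_left ac_simps)

lemma grad_V_eq:
  fixes V :: "real^'n::finite^'n" and A :: "real^'n^'t::finite" and xs :: "'t \<Rightarrow> 'n"
  shows "grad (\<lambda>W. loss W A xs y z) V =
    outer ((V ** datamat xs ** A) *v axis y 1 - axis z 1) ((datamat xs ** A) *v axis y 1)"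
proof (rule grad_eq)
  let ?h = "(datamat xs ** A) *v axis y 1"
  have e: "(\<lambda>W. loss W A xs y z) = (\<lambda>W. (1/2) * (norm (axis z 1 - W *v ?h))\<^sup>2)"
    by (simp add: fun_eq_iff loss_def matrix_vector_mul_assoc matrix_mul_assoc)
  have d: "((\<lambda>W. (1/2) * (norm (axis z 1 - W *v ?h))\<^sup>2) has_derivative (\<lambda>D. inner (V *v ?h - axis z 1) (D *v ?h))) (at V)"
    by (rule deriv_sq[OF bl_mv_left])
  have "(\<lambda>D. inner (V *v ?h - axis z 1) (D *v ?h)) = (\<lambda>D. inner (outer ((V ** datamat xs ** A) *v axis y 1 - axis z 1) ?h) D)"
  proof -
    have "V *v ?h = (V ** datamat xs ** A) *v axis y 1" by (simp add: matrix_vector_mul_assoc matrix_mul_assoc)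
    then show ?thesis by (simp add: inner_outer)
  qed
  then show "((\<lambda>W. loss W A xs y z) has_derivative (\<lambda>D. inner (outer ((V ** datamat xs ** A) *v axis y 1 - axis z 1) ?h) D)) (at V)"
    using d e by simp
qed

lemma grad_a_eq:
  fixes V :: "real^'n::finite^'n" and A :: "real^'n^'t::finite" and xs :: "'t \<Rightarrow> 'n"
  shows "grad (\<lambda>a. loss V (set_col A k a) xs y z) (column k A) =
    (if y = k then transpose (V ** datamat xs) *v ((V ** datamat xs ** A) *v axis y 1 - axis z 1) else 0)"
proof (rule grad_eq)
  show "((\<lambda>a. loss V (set_col A k a) xs y z) has_derivative (\<lambda>d. inner (if y = k then transpose (V ** datamat xs) *v ((V ** datamat xs ** A) *v axis y 1 - axis z 1) else 0) d)) (at (column k A))"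
  proof (cases "y = k")
    case True
    let ?M = "V ** datamat xs"
    have e: "(\<lambda>a. loss V (set_col A k a) xs y z) = (\<lambda>a. (1/2) * (norm (axis z 1 - ?M *v a))\<^sup>2)"
      using True by (simp add: fun_eq_iff loss_def matrix_vector_mul_assoc[symmetric] setcol_axis)
    have d: "((\<lambda>a. (1/2) * (norm (axis z 1 - ?M *v a))\<^sup>2) has_derivative (\<lambda>d. inner (?M *v column k A - axis z 1) (?M *v d))) (at (column k A))"
      by (rule deriv_sq) simp
    have "(\<lambda>d. inner (?M *v column k A - axis z 1) (?M *v d)) = (\<lambda>d. inner (transpose ?M *v ((V ** datamat xs ** A) *v axis y 1 - axis z 1)) d)"
      using True by (simp add: fun_eq_iff dot_lmul_matrix mv_axis[symmetric] matrix_vector_mul_assoc[symmetric])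
    then show ?thesis using d e True by simp
  next
    case False
    have e: "(\<lambda>a. loss V (set_col A k a) xs y z) = (\<lambda>a. loss V A xs y z)"
      using False unfolding loss_def matrix_vector_mul_assoc[symmetric] by (simp add: setcol_axis mv_axis column_setcol)
    show ?thesis using False unfolding e by (simp add: has_derivative_const)
  qed
qed



lemma L_if1: "(\<Sum>s\<in>UNIV. d s * (if t = s then \<alpha> else \<beta>)) = (\<alpha> - \<beta>) * d t + \<beta> * (\<Sum>s\<in>(UNIV::'a::finite set). (d s::real))"
proof -
  have "(\<Sum>s\<in>UNIV. d s * (if t = s then \<alpha> else \<beta>)) = (\<Sum>s\<in>UNIV. (if t = s then (\<alpha> - \<beta>) * d s else 0) + \<beta> * d s)"
    by (rule sum.cong) (auto simp: algebra_simps)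
  also have "\<dots> = (\<alpha> - \<beta>) * d t + \<beta> * (\<Sum>s\<in>(UNIV::'a::finite set). (d s::real))"
    by (simp add: sum.distrib sum.delta sum_distrib_left)
  finally show ?thesis .
qed

lemma L_if2: "(\<Sum>t\<in>UNIV. \<Sum>s\<in>UNIV. c t * d s * (if t = s then \<alpha> else \<beta>)) =
   (\<alpha> - \<beta>) * (\<Sum>t\<in>UNIV. c t * d t) + \<beta> * (\<Sum>t\<in>(UNIV::'a::finite set). (c t::real)) * (\<Sum>s\<in>UNIV. d s)"
proof -
  have "(\<Sum>t\<in>UNIV. \<Sum>s\<in>UNIV. c t * d s * (if t = s then \<alpha> else \<beta>)) = (\<Sum>t\<in>UNIV. c t * (\<Sum>s\<in>UNIV. d s * (if t = s then \<alpha> else \<beta>)))"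
    by (simp add: sum_distrib_left mult.assoc)
  also have "\<dots> = (\<Sum>t\<in>UNIV. c t * ((\<alpha> - \<beta>) * d t + \<beta> * (\<Sum>s\<in>UNIV. d s)))"
    by (simp add: L_if1)
  also have "\<dots> = (\<alpha> - \<beta>) * (\<Sum>t\<in>UNIV. c t * d t) + \<beta> * (\<Sum>t\<in>(UNIV::'a::finite set). (c t::real)) * (\<Sum>s\<in>UNIV. d s)"
    by (simp add: distrib_left sum.distrib sum_distrib_left sum_distrib_right mult_ac)
  finally show ?thesis .
qed

lemma Ex_lin1:
  fixes mu :: "real^'n::finite"
  assumes ms: "(\<Sum>i\<in>UNIV. mu $ i) = 1"
  shows "Ex mu (\<lambda>xs::'t::finite \<Rightarrow> 'n. \<Sum>s\<in>UNIV. d s * F (xs t) (xs s)) =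
    ((\<Sum>i\<in>UNIV. mu $ i * F i i) - (\<Sum>i\<in>UNIV. \<Sum>j\<in>UNIV. mu $ i * mu $ j * F i j)) * d t
    + (\<Sum>i\<in>UNIV. \<Sum>j\<in>UNIV. mu $ i * mu $ j * F i j) * (\<Sum>s\<in>UNIV. d s)"
  by (simp add: Ex_sum Ex_cmult Ex_pair[OF ms] L_if1)

lemma Ex_bilin:
  fixes mu :: "real^'n::finite"
  assumes ms: "(\<Sum>i\<in>UNIV. mu $ i) = 1"
  shows "Ex mu (\<lambda>xs::'t::finite \<Rightarrow> 'n. \<Sum>t\<in>UNIV. \<Sum>s\<in>UNIV. c t * d s * F (xs t) (xs s)) =
    ((\<Sum>i\<in>UNIV. mu $ i * F i i) - (\<Sum>i\<in>UNIV. \<Sum>j\<in>UNIV. mu $ i * mu $ j * F i j)) * (\<Sum>t\<in>UNIV. c t * d t)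
    + (\<Sum>i\<in>UNIV. \<Sum>j\<in>UNIV. mu $ i * mu $ j * F i j) * (\<Sum>t\<in>UNIV. c t) * (\<Sum>s\<in>UNIV. d s)"
  by (simp add: Ex_sum Ex_cmult Ex_pair[OF ms] L_if2)

definition W :: "real^'n^'n \<Rightarrow> real^'n^'t \<Rightarrow> ('t::finite \<Rightarrow> 'n::finite) \<Rightarrow> 'n \<Rightarrow> 'n \<Rightarrow> real" where
  "W P Q xs y z = (\<Sum>u\<in>UNIV. Q $ u $ y * P $ z $ (xs u))"

lemma W_sum:
  assumes "\<forall>j. (\<Sum>i\<in>UNIV. P $ i $ j) = 1" "\<forall>k. (\<Sum>t\<in>UNIV. Q $ t $ k) = 1"
  shows "(\<Sum>z\<in>UNIV. W P Q xs y z) = 1"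
  unfolding W_def using assms by (simp add: sum.swap[of _ UNIV] flip: sum_distrib_left)

lemma expect_entry2:
  "(expect mu P Q f) $ a $ b = (\<Sum>y\<in>UNIV. mu $ y * Ex mu (\<lambda>xs. \<Sum>z\<in>UNIV. W P Q xs y z * (f xs y z $ a $ b)))"
proof -
  have "(expect mu P Q f) $ a $ b = (\<Sum>xs\<in>UNIV. \<Sum>y\<in>UNIV. \<Sum>z\<in>UNIV. mu $ y * ((\<Prod>t\<in>UNIV. mu $ (xs t)) * (W P Q xs y z * (f xs y z $ a $ b))))"
    unfolding expect_def W_def by (simp add: ac_simps)
  also have "\<dots> = (\<Sum>y\<in>UNIV. \<Sum>xs\<in>UNIV. \<Sum>z\<in>UNIV. mu $ y * ((\<Prod>t\<in>UNIV. mu $ (xs t)) * (W P Q xs y z * (f xs y z $ a $ b))))"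
    by (rule sum.swap)
  also have "\<dots> = (\<Sum>y\<in>UNIV. mu $ y * Ex mu (\<lambda>xs. \<Sum>z\<in>UNIV. W P Q xs y z * (f xs y z $ a $ b)))"
    unfolding Ex_def by (simp add: sum_distrib_left)
  finally show ?thesis .
qed

lemma expect_entry1:
  "(expect mu P Q f) $ a = (\<Sum>y\<in>UNIV. mu $ y * Ex mu (\<lambda>xs. \<Sum>z\<in>UNIV. W P Q xs y z * (f xs y z $ a)))"
proof -
  have "(expect mu P Q f) $ a = (\<Sum>xs\<in>UNIV. \<Sum>y\<in>UNIV. \<Sum>z\<in>UNIV. mu $ y * ((\<Prod>t\<in>UNIV. mu $ (xs t)) * (W P Q xs y z * (f xs y z $ a))))"
    unfolding expect_def W_def by (simp add: ac_simps)
  also have "\<dots> = (\<Sum>y\<in>UNIV. \<Sum>xs\<in>UNIV. \<Sum>z\<in>UNIV. mu $ y * ((\<Prod>t\<in>UNIV. mu $ (xs t)) * (W P Q xs y z * (f xs y z $ a))))"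
    by (rule sum.swap)
  also have "\<dots> = (\<Sum>y\<in>UNIV. mu $ y * Ex mu (\<lambda>xs. \<Sum>z\<in>UNIV. W P Q xs y z * (f xs y z $ a)))"
    unfolding Ex_def by (simp add: sum_distrib_left)
  finally show ?thesis .
qed

lemma expect_linear:
  assumes "linear L"
  shows "expect mu P Q (\<lambda>xs y z. L (f xs y z)) = L (expect mu P Q f)"
  unfolding expect_def using assms by (simp add: linear_sum linear_scale)

lemma linear_lmul: "linear (\<lambda>G::real^'b::finite^'a::finite. (M::real^'a^'c::finite) ** G)"
  by (rule linearI) (simp_all add: vec_eq_iff matrix_matrix_mult_def sum.distrib sum_distrib_left algebra_simps)
lemma linear_rmul: "linear (\<lambda>G::real^'b::finite^'a::finite. G ** (M::real^'c::finite^'b))"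
  by (rule linearI) (simp_all add: vec_eq_iff matrix_matrix_mult_def sum.distrib sum_distrib_left algebra_simps)
lemma linear_mv: "linear (\<lambda>g::real^'b::finite. (M::real^'b^'a::finite) *v g)"
  by simp

lemma mu_inner_eq: "mu_inner mu M M' = (\<Sum>i\<in>UNIV. \<Sum>j\<in>UNIV. M $ i $ j * mu $ j * M' $ i $ j)"
  unfolding mu_inner_def trace_def
  by (simp add: matrix_matrix_mult_def diagm_def transpose_def if_distrib if_distribR sum.delta' cong: if_cong)

lemma Vh_entry: "((V ** datamat xs ** A) *v axis y 1) $ a = (\<Sum>t\<in>UNIV. V $ a $ xs t * A $ t $ y)"
  by (simp add: mv_axis column_def matrix_matrix_mult_def datamat_def if_distrib if_distribR sum.delta' sum.swap[of _ UNIV] cong: if_cong)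
lemma h_entry: "((datamat xs ** A) *v axis y 1) $ b = (\<Sum>s\<in>UNIV. (if xs s = b then 1 else 0) * A $ s $ y)"
  by (simp add: mv_axis column_def matrix_matrix_mult_def datamat_def if_distrib if_distribR sum.delta' cong: if_cong)
lemma tr_entry: "(transpose (V ** datamat xs) *v r) $ t = (\<Sum>j\<in>UNIV. V $ j $ xs t * r $ j)"
  by (simp add: matrix_vector_mult_def transpose_def matrix_matrix_mult_def datamat_def if_distrib if_distribR sum.delta' cong: if_cong)



lemma Vmu_entry: "V *v mu = mu \<Longrightarrow> (\<Sum>i\<in>UNIV. V $ a $ i * mu $ i) = mu $ a"
  by (simp add: vec_eq_iff matrix_vector_mult_def)

lemma mult_ifz: "(x::real) * (if P then y else 0) = (if P then x * y else 0)" by simp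

lemma axis_entry: "axis z (1::real) $ a = (if a = z then 1 else 0)"
  by (simp add: axis_def)

lemma EG_y:
  fixes P V :: "real^'n::finite^'n" and mu :: "real^'n" and Q A :: "real^'n^'t::finite"
  assumes ms: "(\<Sum>i\<in>UNIV. mu $ i) = 1"
    and P_col: "\<forall>j. (\<Sum>i\<in>UNIV. P $ i $ j) = 1"
    and Q_col: "\<forall>k. (\<Sum>t\<in>UNIV. Q $ t $ k) = 1"
    and A_col: "\<forall>k. (\<Sum>t\<in>UNIV. A $ t $ k) = 1"
    and V_mu: "V *v mu = mu" and P_mu: "P *v mu = mu"
  shows "Ex mu (\<lambda>xs. \<Sum>z\<in>UNIV. W P Q xs y z *
      (outer ((V ** datamat xs ** A) *v axis y 1 - axis z 1) ((datamat xs ** A) *v axis y 1) $ a $ b))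
    = (mu $ b * V $ a $ b - mu $ b * mu $ a) * (\<Sum>t\<in>UNIV. A $ t $ y * A $ t $ y)
      - (mu $ b * P $ a $ b - mu $ b * mu $ a) * (\<Sum>t\<in>UNIV. Q $ t $ y * A $ t $ y)"
proof -
  have pw: "(\<Sum>z\<in>UNIV. W P Q xs y z *
      (outer ((V ** datamat xs ** A) *v axis y 1 - axis z 1) ((datamat xs ** A) *v axis y 1) $ a $ b))
    = (\<Sum>t\<in>UNIV. \<Sum>s\<in>UNIV. A $ t $ y * A $ s $ y * (V $ a $ xs t * (if xs s = b then 1 else 0)))
    - (\<Sum>t\<in>UNIV. \<Sum>s\<in>UNIV. Q $ t $ y * A $ s $ y * (P $ a $ xs t * (if xs s = b then 1 else 0)))"
    for xs :: "'t \<Rightarrow> 'n"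
  proof -
    let ?X = "\<Sum>t\<in>UNIV. V $ a $ xs t * A $ t $ y"
    let ?H = "\<Sum>s\<in>UNIV. (if xs s = b then 1 else 0) * A $ s $ y"
    have "(\<Sum>z\<in>UNIV. W P Q xs y z *
      (outer ((V ** datamat xs ** A) *v axis y 1 - axis z 1) ((datamat xs ** A) *v axis y 1) $ a $ b))
      = (\<Sum>z\<in>UNIV. W P Q xs y z * ?X * ?H - (if a = z then W P Q xs y z * ?H else 0))"
      by (rule sum.cong) (simp_all add: outer_def Vh_entry h_entry axis_entry algebra_simps)
    also have "\<dots> = (\<Sum>z\<in>UNIV. W P Q xs y z * ?X * ?H) - W P Q xs y a * ?H"
      by (simp add: sum_subtractf sum.delta)
    also have "(\<Sum>z\<in>UNIV. W P Q xs y z * ?X * ?H) = (\<Sum>z\<in>UNIV. W P Q xs y z) * (?X * ?H)"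
      by (simp only: mult.assoc sum_distrib_right)
    also have "(\<Sum>z\<in>UNIV. W P Q xs y z) * (?X * ?H) = ?X * ?H"
      using W_sum[OF P_col Q_col] by simp
    also have "?X * ?H = (\<Sum>t\<in>UNIV. \<Sum>s\<in>UNIV. A $ t $ y * A $ s $ y * (V $ a $ xs t * (if xs s = b then 1 else 0)))"
      by (simp add: sum_product mult_ac)
    also have "W P Q xs y a * ?H = (\<Sum>t\<in>UNIV. \<Sum>s\<in>UNIV. Q $ t $ y * A $ s $ y * (P $ a $ xs t * (if xs s = b then 1 else 0)))"
      by (simp add: W_def sum_product mult_ac)
    finally show ?thesis .
  qed
  have e1: "Ex mu (\<lambda>xs::'t \<Rightarrow> 'n. \<Sum>t\<in>UNIV. \<Sum>s\<in>UNIV. A $ t $ y * A $ s $ y * (V $ a $ xs t * (if xs s = b then 1 else 0)))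
     = (mu $ b * V $ a $ b - mu $ b * mu $ a) * (\<Sum>t\<in>UNIV. A $ t $ y * A $ t $ y) + mu $ b * mu $ a"
  proof -
    have "Ex mu (\<lambda>xs::'t \<Rightarrow> 'n. \<Sum>t\<in>UNIV. \<Sum>s\<in>UNIV. A $ t $ y * A $ s $ y * (V $ a $ xs t * (if xs s = b then 1 else 0)))
      = ((\<Sum>i\<in>UNIV. mu $ i * (V $ a $ i * (if i = b then 1 else 0))) - (\<Sum>i\<in>UNIV. \<Sum>j\<in>UNIV. mu $ i * mu $ j * (V $ a $ i * (if j = b then 1 else 0)))) * (\<Sum>t\<in>UNIV. A $ t $ y * A $ t $ y)
    + (\<Sum>i\<in>UNIV. \<Sum>j\<in>UNIV. mu $ i * mu $ j * (V $ a $ i * (if j = b then 1 else 0))) * (\<Sum>t\<in>UNIV. A $ t $ y) * (\<Sum>s\<in>UNIV. A $ s $ y)"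
      by (rule Ex_bilin[OF ms, of "\<lambda>t. A $ t $ y" "\<lambda>s. A $ s $ y" "\<lambda>i j. V $ a $ i * (if j = b then 1 else 0)", simplified])
    moreover have "(\<Sum>i\<in>UNIV. mu $ i * (V $ a $ i * (if i = b then 1 else 0))) = mu $ b * V $ a $ b"
      by (simp add: mult_ind mult_ifz sum.delta sum.delta')
    moreover have "(\<Sum>i\<in>UNIV. \<Sum>j\<in>UNIV. mu $ i * mu $ j * (V $ a $ i * (if j = b then 1 else 0))) = mu $ b * mu $ a"
    proof -
      have "(\<Sum>i\<in>UNIV. \<Sum>j\<in>UNIV. mu $ i * mu $ j * (V $ a $ i * (if j = b then 1 else 0))) = (\<Sum>i\<in>UNIV. mu $ b * (V $ a $ i * mu $ i))"
        by (rule sum.cong[OF refl]) (simp add: mult_ind mult_ifz sum.delta sum.delta'; simp add: mult_ac)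
      also have "\<dots> = mu $ b * mu $ a" using Vmu_entry[OF V_mu] by (simp flip: sum_distrib_left)
      finally show ?thesis .
    qed
    ultimately show ?thesis using A_col by simp
  qed
  have e2: "Ex mu (\<lambda>xs::'t \<Rightarrow> 'n. \<Sum>t\<in>UNIV. \<Sum>s\<in>UNIV. Q $ t $ y * A $ s $ y * (P $ a $ xs t * (if xs s = b then 1 else 0)))
     = (mu $ b * P $ a $ b - mu $ b * mu $ a) * (\<Sum>t\<in>UNIV. Q $ t $ y * A $ t $ y) + mu $ b * mu $ a"
  proof -
    have "Ex mu (\<lambda>xs::'t \<Rightarrow> 'n. \<Sum>t\<in>UNIV. \<Sum>s\<in>UNIV. Q $ t $ y * A $ s $ y * (P $ a $ xs t * (if xs s = b then 1 else 0)))
      = ((\<Sum>i\<in>UNIV. mu $ i * (P $ a $ i * (if i = b then 1 else 0))) - (\<Sum>i\<in>UNIV. \<Sum>j\<in>UNIV. mu $ i * mu $ j * (P $ a $ i * (if j = b then 1 else 0)))) * (\<Sum>t\<in>UNIV. Q $ t $ y * A $ t $ y)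
    + (\<Sum>i\<in>UNIV. \<Sum>j\<in>UNIV. mu $ i * mu $ j * (P $ a $ i * (if j = b then 1 else 0))) * (\<Sum>t\<in>UNIV. Q $ t $ y) * (\<Sum>s\<in>UNIV. A $ s $ y)"
      by (rule Ex_bilin[OF ms, of "\<lambda>t. Q $ t $ y" "\<lambda>s. A $ s $ y" "\<lambda>i j. P $ a $ i * (if j = b then 1 else 0)", simplified])
    moreover have "(\<Sum>i\<in>UNIV. mu $ i * (P $ a $ i * (if i = b then 1 else 0))) = mu $ b * P $ a $ b"
      by (simp add: mult_ind mult_ifz sum.delta sum.delta')
    moreover have "(\<Sum>i\<in>UNIV. \<Sum>j\<in>UNIV. mu $ i * mu $ j * (P $ a $ i * (if j = b then 1 else 0))) = mu $ b * mu $ a"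
    proof -
      have "(\<Sum>i\<in>UNIV. \<Sum>j\<in>UNIV. mu $ i * mu $ j * (P $ a $ i * (if j = b then 1 else 0))) = (\<Sum>i\<in>UNIV. mu $ b * (P $ a $ i * mu $ i))"
        by (rule sum.cong[OF refl]) (simp add: mult_ind mult_ifz sum.delta sum.delta'; simp add: mult_ac)
      also have "\<dots> = mu $ b * mu $ a" using Vmu_entry[OF P_mu] by (simp flip: sum_distrib_left)
      finally show ?thesis .
    qed
    ultimately show ?thesis using A_col Q_col by simp
  qed
  show ?thesis by (simp add: pw Ex_diff e1 e2)
qed



lemma lin2: "(\<Sum>y\<in>UNIV. m y * (\<alpha> * f y - \<beta> * g y)) = \<alpha> * (\<Sum>y\<in>UNIV. m y * f y) - \<beta> * (\<Sum>y\<in>(UNIV::'a::finite set). (m y::real) * g y)"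
  by (simp add: sum_subtractf sum_distrib_left algebra_simps)

lemma mu_inner_alt: "mu_inner mu M M' = (\<Sum>y\<in>UNIV. mu $ y * (\<Sum>t\<in>UNIV. M $ t $ y * M' $ t $ y))"
  unfolding mu_inner_eq
  by (subst sum.swap) (simp add: sum_distrib_left mult_ac)

lemma EG:
  fixes P V :: "real^'n::finite^'n" and mu :: "real^'n" and Q A :: "real^'n^'t::finite"
  assumes ms: "(\<Sum>i\<in>UNIV. mu $ i) = 1"
    and P_col: "\<forall>j. (\<Sum>i\<in>UNIV. P $ i $ j) = 1"
    and Q_col: "\<forall>k. (\<Sum>t\<in>UNIV. Q $ t $ k) = 1"
    and A_col: "\<forall>k. (\<Sum>t\<in>UNIV. A $ t $ k) = 1"
    and V_mu: "V *v mu = mu" and P_mu: "P *v mu = mu"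
  shows "expect mu P Q (\<lambda>xs y z. outer ((V ** datamat xs ** A) *v axis y 1 - axis z 1) ((datamat xs ** A) *v axis y 1))
    = (\<chi> a b. (mu $ b * V $ a $ b - mu $ b * mu $ a) * mu_inner mu A A - (mu $ b * P $ a $ b - mu $ b * mu $ a) * mu_inner mu Q A)"
  unfolding vec_eq_iff
proof (intro allI)
  fix a b
  show "expect mu P Q (\<lambda>xs y z. outer ((V ** datamat xs ** A) *v axis y 1 - axis z 1) ((datamat xs ** A) *v axis y 1)) $ a $ b
    = (\<chi> a b. (mu $ b * V $ a $ b - mu $ b * mu $ a) * mu_inner mu A A - (mu $ b * P $ a $ b - mu $ b * mu $ a) * mu_inner mu Q A) $ a $ b"
    unfolding expect_entry2 EG_y[OF assms] lin2 mu_inner_alt by simp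
qed

lemma L_left:
  assumes "\<forall>b. (\<Sum>i\<in>UNIV. M $ i $ b) = (0::real)"
  shows "(mat 1 - c *\<^sub>R outer ones ones) ** M = M"
  unfolding vec_eq_iff
proof (intro allI)
  fix a b
  have "((mat 1 - c *\<^sub>R outer ones ones) ** M) $ a $ b = (\<Sum>i\<in>UNIV. (if a = i then M $ i $ b else 0) - c * M $ i $ b)"
    unfolding matrix_matrix_mult_def mat_def outer_def ones_def vec_lambda_beta vector_minus_component vector_scaleR_component
    by (intro sum.cong refl) (simp add: left_diff_distrib)
  also have "\<dots> = M $ a $ b - c * (\<Sum>i\<in>UNIV. M $ i $ b)"
    by (simp add: sum_subtractf sum.delta flip: sum_distrib_left)
  finally show "((mat 1 - c *\<^sub>R outer ones ones) ** M) $ a $ b = M $ a $ b" using assms by simp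
qed

lemma D_right:
  assumes "\<forall>b. mu $ b \<noteq> (0::real)"
  shows "(\<chi> a b. mu $ b * K a b) ** diagm (\<chi> i. 1 / mu $ i) = (\<chi> a b. K a b)"
  unfolding vec_eq_iff
proof (intro allI)
  fix a b
  have "((\<chi> a b. mu $ b * K a b) ** diagm (\<chi> i. 1 / mu $ i)) $ a $ b = (\<Sum>i\<in>UNIV. if i = b then mu $ b * K a b * (1 / mu $ b) else 0)"
    unfolding matrix_matrix_mult_def diagm_def vec_lambda_beta
    by (intro sum.cong refl) auto
  then show "((\<chi> a b. mu $ b * K a b) ** diagm (\<chi> i. 1 / mu $ i)) $ a $ b = (\<chi> a b. K a b) $ a $ b"
    using assms by simp
qed

lemma Pi_right:
  assumes "\<forall>a. (\<Sum>j\<in>UNIV. K $ a $ j * mu $ j) = (0::real)"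
  shows "K ** (mat 1 - c *\<^sub>R outer mu mu) = K"
  unfolding vec_eq_iff
proof (intro allI)
  fix a b
  have "(K ** (mat 1 - c *\<^sub>R outer mu mu)) $ a $ b = (\<Sum>j\<in>UNIV. (if j = b then K $ a $ j else 0) - c * mu $ b * (K $ a $ j * mu $ j))"
    unfolding matrix_matrix_mult_def mat_def outer_def vec_lambda_beta vector_minus_component vector_scaleR_component
    by (intro sum.cong refl) (simp add: algebra_simps)
  also have "\<dots> = K $ a $ b - c * mu $ b * (\<Sum>j\<in>UNIV. K $ a $ j * mu $ j)"
    by (simp only: sum_subtractf sum.delta' sum.delta finite UNIV_I if_True sum_distrib_left)
  finally show "(K ** (mat 1 - c *\<^sub>R outer mu mu)) $ a $ b = K $ a $ b" using assms by simp
qed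



lemma lin3: "(\<Sum>i\<in>UNIV. (f i - g i) * c - (h i - g i) * d) = ((\<Sum>i\<in>(UNIV::'a::finite set). f i) - (\<Sum>i\<in>UNIV. g i)) * c - ((\<Sum>i\<in>UNIV. h i) - (\<Sum>i\<in>UNIV. g i)) * (d::real)"
  by (simp add: sum_subtractf sum.distrib sum_distrib_left sum_distrib_right algebra_simps)

lemma part1:
  fixes P V :: "real^'n::finite^'n" and mu :: "real^'n" and Q A :: "real^'n^'t::finite"
  assumes mu_pos: "\<forall>i. mu $ i > 0"
    and ms: "(\<Sum>i\<in>UNIV. mu $ i) = 1"
    and P_col: "\<forall>j. (\<Sum>i\<in>UNIV. P $ i $ j) = 1"
    and Q_col: "\<forall>k. (\<Sum>t\<in>UNIV. Q $ t $ k) = 1"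
    and A_col: "\<forall>k. (\<Sum>t\<in>UNIV. A $ t $ k) = 1"
    and V_col: "\<forall>j. (\<Sum>i\<in>UNIV. V $ i $ j) = 1"
    and V_mu: "V *v mu = mu" and P_mu: "P *v mu = mu"
  shows "expect mu P Q (hat_grad_V mu V A)
           = mu_inner mu A A *\<^sub>R (V - outer mu ones)
             - mu_inner mu Q A *\<^sub>R (P - outer mu ones)"
proof -
  let ?Lm = "(mat 1 - (1 / real CARD('n)) *\<^sub>R outer ones ones) :: real^'n^'n"
  let ?Dm = "diagm (\<chi> i. 1 / mu $ i) :: real^'n^'n"
  let ?Pm = "(mat 1 - (1 / (norm mu)\<^sup>2) *\<^sub>R outer mu mu) :: real^'n^'n"
  let ?G = "\<lambda>xs y z. outer ((V ** datamat xs ** A) *v axis y 1 - axis z 1) ((datamat xs ** A) *v axis y 1)"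
  let ?c = "mu_inner mu A A" and ?d = "mu_inner mu Q A"
  let ?K = "\<lambda>a b. (V $ a $ b - mu $ a) * ?c - (P $ a $ b - mu $ a) * ?d"
  have hg: "hat_grad_V mu V A = (\<lambda>xs y z. ?Lm ** ?G xs y z ** ?Dm ** ?Pm)"
    by (simp add: fun_eq_iff hat_grad_V_def grad_V_eq)
  have lin: "linear (\<lambda>G. ?Lm ** G ** ?Dm ** ?Pm)"
    using linear_compose[OF linear_compose[OF linear_lmul[of ?Lm] linear_rmul[of ?Dm]] linear_rmul[of ?Pm]]
    by (simp add: o_def)
  have "expect mu P Q (hat_grad_V mu V A) = ?Lm ** expect mu P Q ?G ** ?Dm ** ?Pm"
    unfolding hg by (rule expect_linear[OF lin])
  also have "expect mu P Q ?G = (\<chi> a b. mu $ b * ?K a b)"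
    unfolding EG[OF ms P_col Q_col A_col V_mu P_mu] by (simp add: vec_eq_iff algebra_simps)
  also have "?Lm ** (\<chi> a b. mu $ b * ?K a b) = (\<chi> a b. mu $ b * ?K a b)"
  proof (rule L_left, intro allI)
    fix b
    have "(\<Sum>i\<in>UNIV. (\<chi> a b. mu $ b * ?K a b) $ i $ b) = mu $ b * (\<Sum>i\<in>UNIV. ?K i b)"
      by (simp add: sum_distrib_left)
    also have "(\<Sum>i\<in>UNIV. ?K i b) = 0"
      unfolding lin3 using ms P_col V_col by simp
    finally show "(\<Sum>i\<in>UNIV. (\<chi> a b. mu $ b * ?K a b) $ i $ b) = 0" by simp
  qed
  also have "(\<chi> a b. mu $ b * ?K a b) ** ?Dm = (\<chi> a b. ?K a b)"
    by (rule D_right) (use mu_pos in \<open>auto simp: less_le\<close>)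
  also have "(\<chi> a b. ?K a b) ** ?Pm = (\<chi> a b. ?K a b)"
  proof (rule Pi_right, intro allI)
    fix a
    have "(\<Sum>j\<in>UNIV. (\<chi> a b. ?K a b) $ a $ j * mu $ j) = (\<Sum>j\<in>UNIV. (V $ a $ j * mu $ j - mu $ a * mu $ j) * ?c - (P $ a $ j * mu $ j - mu $ a * mu $ j) * ?d)"
      by (simp add: algebra_simps)
    also have "\<dots> = 0"
      unfolding lin3 using ms Vmu_entry[OF V_mu] Vmu_entry[OF P_mu] by (simp flip: sum_distrib_left)
    finally show "(\<Sum>j\<in>UNIV. (\<chi> a b. ?K a b) $ a $ j * mu $ j) = 0" .
  qed
  also have "(\<chi> a b. ?K a b) = ?c *\<^sub>R (V - outer mu ones) - ?d *\<^sub>R (P - outer mu ones)"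
    by (simp add: vec_eq_iff outer_def ones_def algebra_simps)
  finally show ?thesis .
qed



lemma Ex_zero: "Ex mu (\<lambda>xs. 0) = 0" by (simp add: Ex_def)

lemma beta_lem:
  fixes X Y :: "real^'n::finite^'m::finite" and mu :: "real^'n"
  shows "(\<Sum>i\<in>UNIV. \<Sum>j\<in>UNIV. mu $ i * mu $ j * (\<Sum>l\<in>UNIV. X $ l $ i * Y $ l $ j))
   = (\<Sum>l\<in>UNIV. (\<Sum>i\<in>UNIV. X $ l $ i * mu $ i) * (\<Sum>j\<in>UNIV. Y $ l $ j * mu $ j))"
proof -
  have "(\<Sum>l\<in>UNIV. (\<Sum>i\<in>UNIV. X $ l $ i * mu $ i) * (\<Sum>j\<in>UNIV. Y $ l $ j * mu $ j))
     = (\<Sum>l\<in>UNIV. \<Sum>i\<in>UNIV. \<Sum>j\<in>UNIV. X $ l $ i * mu $ i * (Y $ l $ j * mu $ j))"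
    by (simp add: sum_product)
  also have "\<dots> = (\<Sum>i\<in>UNIV. \<Sum>l\<in>UNIV. \<Sum>j\<in>UNIV. X $ l $ i * mu $ i * (Y $ l $ j * mu $ j))"
    by (rule sum.swap)
  also have "\<dots> = (\<Sum>i\<in>UNIV. \<Sum>j\<in>UNIV. \<Sum>l\<in>UNIV. X $ l $ i * mu $ i * (Y $ l $ j * mu $ j))"
    by (rule sum.cong[OF refl], rule sum.swap)
  also have "\<dots> = (\<Sum>i\<in>UNIV. \<Sum>j\<in>UNIV. mu $ i * mu $ j * (\<Sum>l\<in>UNIV. X $ l $ i * Y $ l $ j))"
    by (simp add: sum_distrib_left mult_ac)
  finally show ?thesis by simp
qed

lemma norm_sq: "(norm (mu::real^'n::finite))\<^sup>2 = (\<Sum>l\<in>UNIV. mu $ l * mu $ l)"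
  by (simp add: power2_norm_eq_inner inner_vec_def)

lemma g_entry:
  "(transpose (V ** datamat xs) *v ((V ** datamat xs ** A) *v axis k 1 - axis z 1)) $ t
   = (\<Sum>s\<in>UNIV. A $ s $ k * (\<Sum>l\<in>UNIV. V $ l $ xs t * V $ l $ xs s)) - V $ z $ xs t"
proof -
  have "(transpose (V ** datamat xs) *v ((V ** datamat xs ** A) *v axis k 1 - axis z 1)) $ t
    = (\<Sum>l\<in>UNIV. \<Sum>s\<in>UNIV. A $ s $ k * (V $ l $ xs t * V $ l $ xs s)) - (\<Sum>l\<in>UNIV. if l = z then V $ l $ xs t else 0)"
    by (simp add: tr_entry Vh_entry axis_entry right_diff_distrib sum_subtractf sum_distrib_left mult_ac mult_ind sum.delta del: transpose_matrix_vector)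
  also have "(\<Sum>l\<in>UNIV. \<Sum>s\<in>UNIV. A $ s $ k * (V $ l $ xs t * V $ l $ xs s)) = (\<Sum>s\<in>UNIV. \<Sum>l\<in>UNIV. A $ s $ k * (V $ l $ xs t * V $ l $ xs s))"
    by (rule sum.swap)
  finally show ?thesis by (simp add: sum_distrib_left)
qed

lemma Eg:
  fixes P V :: "real^'n::finite^'n" and mu :: "real^'n" and Q A :: "real^'n^'t::finite"
  assumes ms: "(\<Sum>i\<in>UNIV. mu $ i) = 1"
    and P_col: "\<forall>j. (\<Sum>i\<in>UNIV. P $ i $ j) = 1"
    and Q_col: "\<forall>k. (\<Sum>t\<in>UNIV. Q $ t $ k) = 1"
    and A_col: "\<forall>k. (\<Sum>t\<in>UNIV. A $ t $ k) = 1"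
    and V_mu: "V *v mu = mu" and P_mu: "P *v mu = mu"
  shows "expect mu P Q (\<lambda>xs y z. if y = k then transpose (V ** datamat xs) *v ((V ** datamat xs ** A) *v axis y 1 - axis z 1) else 0) $ t
    = mu $ k * ((mu_inner mu V V - (norm mu)\<^sup>2) * A $ t $ k - (mu_inner mu V P - (norm mu)\<^sup>2) * Q $ t $ k)"
proof -
  let ?g = "\<lambda>xs z. transpose (V ** datamat xs) *v ((V ** datamat xs ** A) *v axis k 1 - axis z 1)"
  let ?M1 = "\<lambda>i j. \<Sum>l\<in>UNIV. V $ l $ i * V $ l $ j"
  let ?M2 = "\<lambda>i j. \<Sum>l\<in>UNIV. V $ l $ i * P $ l $ j"
  have "expect mu P Q (\<lambda>xs y z. if y = k then transpose (V ** datamat xs) *v ((V ** datamat xs ** A) *v axis y 1 - axis z 1) else 0) $ t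
     = (\<Sum>y\<in>UNIV. if y = k then mu $ k * Ex mu (\<lambda>xs. \<Sum>z\<in>UNIV. W P Q xs k z * (?g xs z $ t)) else 0)"
    unfolding expect_entry1 by (rule sum.cong[OF refl]) (simp add: Ex_zero)
  also have "\<dots> = mu $ k * Ex mu (\<lambda>xs. \<Sum>z\<in>UNIV. W P Q xs k z * (?g xs z $ t))"
    by simp
  also have "(\<lambda>xs. \<Sum>z\<in>UNIV. W P Q xs k z * (?g xs z $ t))
    = (\<lambda>xs. (\<Sum>s\<in>UNIV. A $ s $ k * ?M1 (xs t) (xs s)) - (\<Sum>u\<in>UNIV. Q $ u $ k * ?M2 (xs t) (xs u)))"
  proof
    fix xs :: "'t \<Rightarrow> 'n"
    let ?X = "\<Sum>s\<in>UNIV. A $ s $ k * ?M1 (xs t) (xs s)"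
    have "(\<Sum>z\<in>UNIV. W P Q xs k z * (?g xs z $ t)) = (\<Sum>z\<in>UNIV. W P Q xs k z * ?X - W P Q xs k z * V $ z $ xs t)"
      unfolding g_entry by (simp only: right_diff_distrib)
    also have "\<dots> = (\<Sum>z\<in>UNIV. W P Q xs k z) * ?X - (\<Sum>z\<in>UNIV. W P Q xs k z * V $ z $ xs t)"
      by (simp add: sum_subtractf sum_distrib_right)
    also have "(\<Sum>z\<in>UNIV. W P Q xs k z) = 1" by (rule W_sum[OF P_col Q_col])
    also have "(\<Sum>z\<in>UNIV. W P Q xs k z * V $ z $ xs t) = (\<Sum>z\<in>UNIV. \<Sum>u\<in>UNIV. Q $ u $ k * (V $ z $ xs t * P $ z $ xs u))"
      unfolding W_def sum_distrib_right by (simp add: mult_ac)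
    also have "\<dots> = (\<Sum>u\<in>UNIV. \<Sum>z\<in>UNIV. Q $ u $ k * (V $ z $ xs t * P $ z $ xs u))"
      by (rule sum.swap)
    also have "\<dots> = (\<Sum>u\<in>UNIV. Q $ u $ k * ?M2 (xs t) (xs u))"
      by (simp add: sum_distrib_left)
    finally show "(\<Sum>z\<in>UNIV. W P Q xs k z * (?g xs z $ t)) = ?X - (\<Sum>u\<in>UNIV. Q $ u $ k * ?M2 (xs t) (xs u))"
      by simp
  qed
  also have "Ex mu (\<lambda>xs. (\<Sum>s\<in>UNIV. A $ s $ k * ?M1 (xs t) (xs s)) - (\<Sum>u\<in>UNIV. Q $ u $ k * ?M2 (xs t) (xs u)))
    = (((\<Sum>i\<in>UNIV. mu $ i * ?M1 i i) - (\<Sum>i\<in>UNIV. \<Sum>j\<in>UNIV. mu $ i * mu $ j * ?M1 i j)) * A $ t $ k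
        + (\<Sum>i\<in>UNIV. \<Sum>j\<in>UNIV. mu $ i * mu $ j * ?M1 i j) * (\<Sum>s\<in>UNIV. A $ s $ k))
     - (((\<Sum>i\<in>UNIV. mu $ i * ?M2 i i) - (\<Sum>i\<in>UNIV. \<Sum>j\<in>UNIV. mu $ i * mu $ j * ?M2 i j)) * Q $ t $ k
        + (\<Sum>i\<in>UNIV. \<Sum>j\<in>UNIV. mu $ i * mu $ j * ?M2 i j) * (\<Sum>s\<in>UNIV. Q $ s $ k))"
    unfolding Ex_diff
    by (simp only: Ex_lin1[OF ms, of "\<lambda>s. A $ s $ k" ?M1 t] Ex_lin1[OF ms, of "\<lambda>s. Q $ s $ k" ?M2 t])
  also have "(\<Sum>i\<in>UNIV. \<Sum>j\<in>UNIV. mu $ i * mu $ j * ?M1 i j) = (norm mu)\<^sup>2"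
    unfolding beta_lem norm_sq using Vmu_entry[OF V_mu] by simp
  also have "(\<Sum>i\<in>UNIV. \<Sum>j\<in>UNIV. mu $ i * mu $ j * ?M2 i j) = (norm mu)\<^sup>2"
    unfolding beta_lem norm_sq using Vmu_entry[OF V_mu] Vmu_entry[OF P_mu] by simp
  also have "(\<Sum>i\<in>UNIV. mu $ i * ?M1 i i) = mu_inner mu V V"
    unfolding mu_inner_alt ..
  also have "(\<Sum>i\<in>UNIV. mu $ i * ?M2 i i) = mu_inner mu V P"
    unfolding mu_inner_alt ..
  finally show ?thesis using A_col Q_col by (simp add: algebra_simps)
qed



lemma LT_entry: "((mat 1 - c *\<^sub>R outer ones ones) *v (v::real^'a::finite)) $ t = v $ t - c * (\<Sum>s\<in>UNIV. v $ s)"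
proof -
  have "((mat 1 - c *\<^sub>R outer ones ones) *v v) $ t = (\<Sum>s\<in>UNIV. (if t = s then v $ s else 0) - c * v $ s)"
    unfolding matrix_vector_mult_def mat_def outer_def ones_def vec_lambda_beta vector_minus_component vector_scaleR_component
    by (intro sum.cong refl) (simp add: left_diff_distrib)
  also have "\<dots> = v $ t - c * (\<Sum>s\<in>UNIV. v $ s)"
    by (simp add: sum_subtractf sum.delta flip: sum_distrib_left)
  finally show ?thesis .
qed

lemma lin4: "(\<Sum>s\<in>UNIV. m * (a1 * f s - a2 * g s)) = m * (a1 * (\<Sum>s\<in>UNIV. f s) - a2 * (\<Sum>s\<in>(UNIV::'a::finite set). (g s::real)))"
  by (simp add: sum_subtractf sum_distrib_left algebra_simps)

lemma part2:
  fixes P V :: "real^'n::finite^'n" and mu :: "real^'n" and Q A :: "real^'n^'t::finite"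
  assumes mu_pos: "\<forall>i. mu $ i > 0"
    and ms: "(\<Sum>i\<in>UNIV. mu $ i) = 1"
    and P_col: "\<forall>j. (\<Sum>i\<in>UNIV. P $ i $ j) = 1"
    and Q_col: "\<forall>k. (\<Sum>t\<in>UNIV. Q $ t $ k) = 1"
    and A_col: "\<forall>k. (\<Sum>t\<in>UNIV. A $ t $ k) = 1"
    and V_mu: "V *v mu = mu" and P_mu: "P *v mu = mu"
  shows "expect mu P Q (hat_grad_a mu V A k)
           = (mu_inner mu V V - (norm mu)\<^sup>2) *\<^sub>R (column k A - (1 / real CARD('t)) *\<^sub>R ones)
             - (mu_inner mu V P - (norm mu)\<^sup>2) *\<^sub>R (column k Q - (1 / real CARD('t)) *\<^sub>R ones)"
proof -
  let ?LT = "(mat 1 - (1 / real CARD('t)) *\<^sub>R outer ones ones) :: real^'t^'t"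
  let ?gA = "\<lambda>xs y z. if y = k then transpose (V ** datamat xs) *v ((V ** datamat xs ** A) *v axis y 1 - axis z 1) else 0"
  let ?a1 = "mu_inner mu V V - (norm mu)\<^sup>2" and ?a2 = "mu_inner mu V P - (norm mu)\<^sup>2"
  have hg: "hat_grad_a mu V A k = (\<lambda>xs y z. (1 / mu $ k) *\<^sub>R (?LT *v ?gA xs y z))"
    by (simp add: fun_eq_iff hat_grad_a_def grad_a_eq del: transpose_matrix_vector)
  have lin: "linear (\<lambda>g. (1 / mu $ k) *\<^sub>R (?LT *v g))"
    using linear_compose[OF linear_mv[of ?LT] bounded_linear.linear[OF bounded_linear_scaleR_right[of "1 / mu $ k"]]]
    by (simp add: o_def)
  have "expect mu P Q (hat_grad_a mu V A k) = (1 / mu $ k) *\<^sub>R (?LT *v expect mu P Q ?gA)"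
    unfolding hg by (rule expect_linear[OF lin])
  also have "\<dots> = ?a1 *\<^sub>R (column k A - (1 / real CARD('t)) *\<^sub>R ones) - ?a2 *\<^sub>R (column k Q - (1 / real CARD('t)) *\<^sub>R ones)"
    unfolding vec_eq_iff
  proof
    fix t
    have mk: "mu $ k \<noteq> 0" using mu_pos by (metis less_irrefl)
    have E: "\<And>s. expect mu P Q ?gA $ s = mu $ k * (?a1 * A $ s $ k - ?a2 * Q $ s $ k)"
      by (rule Eg[OF ms P_col Q_col A_col V_mu P_mu])
    have "((1 / mu $ k) *\<^sub>R (?LT *v expect mu P Q ?gA)) $ t
       = (1 / mu $ k) * (mu $ k * (?a1 * A $ t $ k - ?a2 * Q $ t $ k) - (1 / real CARD('t)) * (mu $ k * (?a1 - ?a2)))"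
      unfolding vector_scaleR_component LT_entry E lin4 using A_col Q_col by simp
    also have "\<dots> = ?a1 * (A $ t $ k - 1 / real CARD('t)) - ?a2 * (Q $ t $ k - 1 / real CARD('t))"
      using mk by (simp add: field_simps)
    finally show "((1 / mu $ k) *\<^sub>R (?LT *v expect mu P Q ?gA)) $ t =
      (?a1 *\<^sub>R (column k A - (1 / real CARD('t)) *\<^sub>R ones) - ?a2 *\<^sub>R (column k Q - (1 / real CARD('t)) *\<^sub>R ones)) $ t"
      by (simp add: column_def ones_def)
  qed
  finally show ?thesis .
qed


theorem lemmaB8:
  fixes P V :: "real^'n::finite^'n"
    and mu :: "real^'n"
    and Q A :: "real^'n^'t::finite"
  assumes P_nonneg: "\<forall>i j. P $ i $ j \<ge> 0"
    and P_col: "\<forall>j. (\<Sum>i\<in>UNIV. P $ i $ j) = 1"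
    and mu_pos: "\<forall>i. mu $ i > 0"
    and mu_sum: "(\<Sum>i\<in>UNIV. mu $ i) = 1"
    and P_mu: "P *v mu = mu"
    and Q_nonneg: "\<forall>t k. Q $ t $ k \<ge> 0"
    and Q_col: "\<forall>k. (\<Sum>t\<in>UNIV. Q $ t $ k) = 1"
    and V_col: "\<forall>j. (\<Sum>i\<in>UNIV. V $ i $ j) = 1"
    and V_mu: "V *v mu = mu"
    and A_col: "\<forall>k. (\<Sum>t\<in>UNIV. A $ t $ k) = 1"
  shows "(expect mu P Q (hat_grad_V mu V A)
           = mu_inner mu A A *\<^sub>R (V - outer mu ones)
             - mu_inner mu Q A *\<^sub>R (P - outer mu ones)) \<and>
         (\<forall>k. expect mu P Q (hat_grad_a mu V A k)
           = (mu_inner mu V V - (norm mu)\<^sup>2) *\<^sub>R (column k A - (1 / real CARD('t)) *\<^sub>R ones)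
             - (mu_inner mu V P - (norm mu)\<^sup>2) *\<^sub>R (column k Q - (1 / real CARD('t)) *\<^sub>R ones))"
    using part1[OF mu_pos mu_sum P_col Q_col A_col V_col V_mu P_mu]
        part2[OF mu_pos mu_sum P_col Q_col A_col V_mu P_mu] by blast

end
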